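(* Let $\mathcal{X},\mathcal{Y}$ be finite sets, $\mathcal{S}\subseteq\mathcal{X}\times\mathcal{Y}$, and $f:\mathcal{S}\to\{0,1\}$ with $f^{-1}(0)$ and $f^{-1}(1)$ both nonempty. Let $\sigma$ be the uniform distribution on $\mathcal{X}\times\mathcal{Y}$ and, for $b\in\{0,1\}$, $\sigma_b$ the uniform distribution on $f^{-1}(b)$. Suppose $c>0$ is such that for every rectangle $R\subseteq\mathcal{X}\times\mathcal{Y}$ and every $b\in\{0,1\}$, $$\sigma_b(R\cap f^{-1}(b))\ge0.8\,\sigma(R)-c.$$ Then for every $\varepsilon\ge0$, $\overline{\mathrm{prt}}_\varepsilon(f)\ge\frac{1}{c}(0.8-2.8\varepsilon)$.
   Context: Rectangles are $A\times B$ with $A\subseteq\mathcal{X}$, $B\subseteq\mathcal{Y}$ (including the empty one). For a distribution $\mu$ on $\mathcal{X}\times\mathcal{Y}$, $\overline{\mathrm{prt}}^\mu_\varepsilon(f)$ is the value of: minimize $1/\eta$ over $\eta>0$ and $p_{R,z}\ge0$ ($R$ all rectangles, $z\in\{0,1\}$) s.t. (i) $\sum_{(x,y)\in\mathcal{S}}\mu(x,y)\sum_{R\ni(x,y)}p_{R,f(x,y)}+\sum_{(x,y)\notin\mathcal{S}}\mu(x,y)\sum_{z,R\ni(x,y)}p_{R,z}\ge(1-\varepsilon)\eta$; (ii) $\forall(x,y)\in\mathcal{X}\times\mathcal{Y}$: $\sum_{z,R\ni(x,y)}p_{R,z}\le\eta$; (iii) $\sum_{R,z}p_{R,z}=1$.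 $\overline{\mathrm{prt}}_\varepsilon(f)=\max_\mu\overline{\mathrm{prt}}^\mu_\varepsilon(f)$. *)

theory Defs
  imports Main "HOL-Library.Extended_Real"
begin

definition rectangles :: "'a set \<Rightarrow> 'b set \<Rightarrow> ('a \<times> 'b) set set" where
  "rectangles X Y = {A \<times> B | A B. A \<subseteq> X \<and> B \<subseteq> Y}"

definition distribution :: "'a set \<Rightarrow> 'b set \<Rightarrow> ('a \<times> 'b \<Rightarrow> real) \<Rightarrow> bool" where
  "distribution X Y \<mu> \<longleftrightarrow> (\<forall>s\<in>X \<times> Y. \<mu> s \<ge> 0) \<and> (\<Sum>s\<in>X \<times> Y. \<mu> s) = 1"

(* feasibility of (\<eta>, p) in the LP defining prt-bar^\<mu>_\<epsilon>(f);
   p R z for R a rectangle and z \<in> {0,1} *)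
definition prt_feasible ::
  "'a set \<Rightarrow> 'b set \<Rightarrow> ('a \<times> 'b) set \<Rightarrow> ('a \<times> 'b \<Rightarrow> nat) \<Rightarrow> real \<Rightarrow>
   ('a \<times> 'b \<Rightarrow> real) \<Rightarrow> real \<Rightarrow> (('a \<times> 'b) set \<Rightarrow> nat \<Rightarrow> real) \<Rightarrow> bool" where
  "prt_feasible X Y S f \<epsilon> \<mu> \<eta> p \<longleftrightarrow>
     \<eta> > 0 \<and>
     (\<forall>R\<in>rectangles X Y. \<forall>z\<in>{0,1}. p R z \<ge> 0) \<and>
     (\<Sum>s\<in>S. \<mu> s * (\<Sum>R\<in>{R\<in>rectangles X Y. s \<in> R}. p R (f s)))
       + (\<Sum>s\<in>(X \<times> Y) - S. \<mu> s * (\<Sum>z\<in>{0::nat,1}. \<Sum>R\<in>{R\<in>rectangles X Y. s \<in> R}. p R z))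
       \<ge> (1 - \<epsilon>) * \<eta> \<and>
     (\<forall>s\<in>X \<times> Y. (\<Sum>z\<in>{0::nat,1}. \<Sum>R\<in>{R\<in>rectangles X Y. s \<in> R}. p R z) \<le> \<eta>) \<and>
     (\<Sum>z\<in>{0::nat,1}. \<Sum>R\<in>rectangles X Y. p R z) = 1"

definition prt_mu ::
  "'a set \<Rightarrow> 'b set \<Rightarrow> ('a \<times> 'b) set \<Rightarrow> ('a \<times> 'b \<Rightarrow> nat) \<Rightarrow> real \<Rightarrow>
   ('a \<times> 'b \<Rightarrow> real) \<Rightarrow> real" where
  "prt_mu X Y S f \<epsilon> \<mu> = Inf {1 / \<eta> | \<eta> p. prt_feasible X Y S f \<epsilon> \<mu> \<eta> p}"

definition prt_bar ::
  "'a set \<Rightarrow> 'b set \<Rightarrow> ('a \<times> 'b) set \<Rightarrow> ('a \<times> 'b \<Rightarrow> nat) \<Rightarrow> real \<Rightarrow> real" where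
  "prt_bar X Y S f \<epsilon> = Sup {prt_mu X Y S f \<epsilon> \<mu> | \<mu>. distribution X Y \<mu>}"

end

theory Submission
  imports Defs
begin

lemma swap_sum:
  fixes w :: "'a \<Rightarrow> real" and g :: "'a set \<Rightarrow> real"
  assumes "finite A" "finite RR"
  shows "(\<Sum>s\<in>A. w s * (\<Sum>R\<in>{R\<in>RR. s \<in> R}. g R)) = (\<Sum>R\<in>RR. g R * (\<Sum>s\<in>A \<inter> R. w s))"
proof -
  have "(\<Sum>s\<in>A. w s * (\<Sum>R\<in>{R\<in>RR. s \<in> R}. g R)) = (\<Sum>s\<in>A. \<Sum>R\<in>RR. if s \<in> R then w s * g R else 0)"
    by (intro sum.cong refl) (simp add: sum.inter_filter assms sum_distrib_left, intro sum.cong, auto)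
  also have "\<dots> = (\<Sum>R\<in>RR. \<Sum>s\<in>A. if s \<in> R then w s * g R else 0)" by (rule sum.swap)
  also have "\<dots> = (\<Sum>R\<in>RR. g R * (\<Sum>s\<in>A \<inter> R. w s))"
  proof (intro sum.cong refl)
    fix R
    have "(\<Sum>s\<in>A \<inter> R. w s) = (\<Sum>s\<in>A. if s \<in> R then w s else 0)"
      by (simp add: sum.inter_restrict assms)
    then show "(\<Sum>s\<in>A. if s \<in> R then w s * g R else 0) = g R * (\<Sum>s\<in>A \<inter> R. w s)"
      by (simp add: sum_distrib_left if_distrib, intro sum.cong, auto)
  qed
  finally show ?thesis .
qed

lemma fin_rect: "finite X \<Longrightarrow> finite Y \<Longrightarrow> finite (rectangles X Y)"
  by (rule finite_subset[of _ "Pow (X \<times> Y)"]) (auto simp: rectangles_def)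

lemma rect_sub: "R \<in> rectangles X Y \<Longrightarrow> R \<subseteq> X \<times> Y"
  by (auto simp: rectangles_def)

lemma single_rect: "s \<in> X \<times> Y \<Longrightarrow> {s} \<in> rectangles X Y"
  unfolding rectangles_def by (cases s) (rule CollectI, rule exI[of _ "{fst s}"], rule exI[of _ "{snd s}"], auto)

lemma ex_feas:
  fixes X :: "'a set" and Y :: "'b set" and S :: "('a \<times> 'b) set"
    and f :: "'a \<times> 'b \<Rightarrow> nat"
  assumes fX: "finite X" and fY: "finite Y" and SXY: "S \<subseteq> X \<times> Y"
    and f01: "\<forall>s\<in>S. f s \<in> {0, 1}" and ne: "X \<times> Y \<noteq> {}"
    and dist: "distribution X Y \<mu>" and eps: "\<epsilon> \<ge> 0"
  shows "\<exists>p. prt_feasible X Y S f \<epsilon> \<mu> (1 / real (card (X \<times> Y))) p"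
proof -
  define N where "N = real (card (X \<times> Y))"
  have finXY: "finite (X \<times> Y)" using fX fY by simp
  have Npos: "N > 0" using ne finXY by (simp add: N_def card_gt_0_iff)
  define g where "g = (\<lambda>s. if s \<in> S then f s else 0)"
  have g01: "g s \<in> {0,1}" for s using f01 by (auto simp: g_def)
  define p where "p = (\<lambda>R (z::nat). if \<exists>t\<in>X \<times> Y. R = {t} \<and> z = g t then 1/N else 0)"
  have key: "(\<Sum>R\<in>{R\<in>rectangles X Y. s \<in> R}. p R z) = (if z = g s then 1/N else 0)"
    if s: "s \<in> X \<times> Y" for s z
  proof -
    have "(\<Sum>R\<in>{R\<in>rectangles X Y. s \<in> R}. p R z)
        = (\<Sum>R\<in>{R\<in>rectangles X Y. s \<in> R}. if R = {s} then (if z = g s then 1/N else 0) else 0)"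
      using s by (intro sum.cong refl) (auto simp: p_def)
    also have "\<dots> = (if z = g s then 1/N else 0)"
      using single_rect[OF s] fin_rect[OF fX fY] by (simp add: sum.delta)
    finally show ?thesis .
  qed
  have cov: "(\<Sum>z\<in>{0::nat,1}. \<Sum>R\<in>{R\<in>rectangles X Y. s \<in> R}. p R z) = 1/N"
    if s: "s \<in> X \<times> Y" for s
    using g01[of s] by (auto simp: key[OF s])
  have corr: "(\<Sum>R\<in>{R\<in>rectangles X Y. s \<in> R}. p R (f s)) = 1/N" if s: "s \<in> S" for s
    using s SXY by (subst key) (auto simp: g_def)
  have i: "(\<Sum>s\<in>S. \<mu> s * (\<Sum>R\<in>{R\<in>rectangles X Y. s \<in> R}. p R (f s)))
       + (\<Sum>s\<in>(X \<times> Y) - S. \<mu> s * (\<Sum>z\<in>{0::nat,1}. \<Sum>R\<in>{R\<in>rectangles X Y. s \<in> R}. p R z))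
       = (\<Sum>s\<in>X \<times> Y. \<mu> s) * (1/N)"
  proof -
    have "(\<Sum>s\<in>S. \<mu> s * (\<Sum>R\<in>{R\<in>rectangles X Y. s \<in> R}. p R (f s))) = (\<Sum>s\<in>S. \<mu> s * (1/N))"
      by (intro sum.cong refl) (simp add: corr)
    moreover have "(\<Sum>s\<in>(X \<times> Y) - S. \<mu> s * (\<Sum>z\<in>{0::nat,1}. \<Sum>R\<in>{R\<in>rectangles X Y. s \<in> R}. p R z))
        = (\<Sum>s\<in>(X \<times> Y) - S. \<mu> s * (1/N))"
    proof (intro sum.cong refl)
      fix s assume "s \<in> X \<times> Y - S"
      then show "\<mu> s * (\<Sum>z\<in>{0::nat,1}. \<Sum>R\<in>{R\<in>rectangles X Y. s \<in> R}. p R z) = \<mu> s * (1/N)"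
        using cov[of s] by simp
    qed
    moreover have "(\<Sum>s\<in>S. \<mu> s * (1/N)) + (\<Sum>s\<in>(X \<times> Y) - S. \<mu> s * (1/N)) = (\<Sum>s\<in>X \<times> Y. \<mu> s * (1/N))"
      using sum.subset_diff[OF SXY finXY, of "\<lambda>s. \<mu> s * (1/N)"] by simp
    ultimately show ?thesis by (simp add: sum_divide_distrib)
  qed
  have iii: "(\<Sum>z\<in>{0::nat,1}. \<Sum>R\<in>rectangles X Y. p R z) = 1"
  proof -
    have "(\<Sum>z\<in>{0::nat,1}. \<Sum>R\<in>rectangles X Y. p R z) = (\<Sum>R\<in>rectangles X Y. p R 0 + p R 1)"
      by (simp add: sum.distrib)
    also have "\<dots> = (\<Sum>R\<in>rectangles X Y. (p R 0 + p R 1) * (\<Sum>s\<in>(X \<times> Y) \<inter> R. 1))"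
    proof (intro sum.cong refl)
      fix R assume R: "R \<in> rectangles X Y"
      show "p R 0 + p R 1 = (p R 0 + p R 1) * (\<Sum>s\<in>(X \<times> Y) \<inter> R. 1)"
      proof (cases "\<exists>t\<in>X \<times> Y. R = {t}")
        case True
        then obtain t where "t \<in> X \<times> Y" "R = {t}" by blast
        then show ?thesis by simp
      next
        case False
        then show ?thesis by (simp add: p_def)
      qed
    qed
    also have "\<dots> = (\<Sum>s\<in>X \<times> Y. 1 * (\<Sum>R\<in>{R\<in>rectangles X Y. s \<in> R}. p R 0 + p R 1))"
      by (rule swap_sum[symmetric]) (use finXY fin_rect[OF fX fY] in auto)
    also have "\<dots> = (\<Sum>s\<in>X \<times> Y. 1/N)"
    proof (intro sum.cong refl)
      fix s assume s: "s \<in> X \<times> Y"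
      show "1 * (\<Sum>R\<in>{R\<in>rectangles X Y. s \<in> R}. p R 0 + p R 1) = 1/N"
        using cov[OF s] by (simp add: sum.distrib)
    qed
    also have "\<dots> = 1" using Npos by (simp add: N_def)
    finally show ?thesis .
  qed
  have feas: "prt_feasible X Y S f \<epsilon> \<mu> (1/N) p"
    unfolding prt_feasible_def
  proof (intro conjI ballI)
    show "0 < 1/N" using Npos by simp
    show "\<And>R z. 0 \<le> p R z" using Npos by (simp add: p_def)
    have "(1 - \<epsilon>) * (1/N) \<le> 1 * (1/N)" using eps Npos by (simp add: divide_right_mono)
    then show "(1 - \<epsilon>) * (1/N) \<le> (\<Sum>s\<in>S. \<mu> s * (\<Sum>R\<in>{R\<in>rectangles X Y. s \<in> R}. p R (f s)))
       + (\<Sum>s\<in>(X \<times> Y) - S. \<mu> s * (\<Sum>z\<in>{0::nat,1}. \<Sum>R\<in>{R\<in>rectangles X Y. s \<in> R}. p R z))"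
      using i dist by (simp add: distribution_def)
    show "\<And>s. s \<in> X \<times> Y \<Longrightarrow> (\<Sum>z\<in>{0::nat,1}. \<Sum>R\<in>{R\<in>rectangles X Y. s \<in> R}. p R z) \<le> 1/N"
      using cov by simp
    show "(\<Sum>z\<in>{0::nat,1}. \<Sum>R\<in>rectangles X Y. p R z) = 1" by (rule iii)
  qed
  then show ?thesis unfolding N_def by blast
qed

lemma prt_mu_le:
  fixes X :: "'a set" and Y :: "'b set" and S :: "('a \<times> 'b) set"
    and f :: "'a \<times> 'b \<Rightarrow> nat"
  assumes fX: "finite X" and fY: "finite Y" and SXY: "S \<subseteq> X \<times> Y"
    and f01: "\<forall>s\<in>S. f s \<in> {0, 1}" and ne: "X \<times> Y \<noteq> {}"
    and dist: "distribution X Y \<mu>" and eps: "\<epsilon> \<ge> 0"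
  shows "prt_mu X Y S f \<epsilon> \<mu> \<le> real (card (X \<times> Y))"
proof -
  define N where "N = real (card (X \<times> Y))"
  obtain p where feas: "prt_feasible X Y S f \<epsilon> \<mu> (1/N) p"
    using ex_feas[OF assms] unfolding N_def by blast
  have mem: "1 / (1/N) \<in> {1 / \<eta> | \<eta> p. prt_feasible X Y S f \<epsilon> \<mu> \<eta> p}"
    using feas by blast
  have bdd: "bdd_below {1 / \<eta> | \<eta> p. prt_feasible X Y S f \<epsilon> \<mu> \<eta> p}"
    by (rule bdd_belowI[of _ 0]) (auto simp: prt_feasible_def)
  have "prt_mu X Y S f \<epsilon> \<mu> \<le> 1 / (1/N)"
    unfolding prt_mu_def by (rule cInf_lower[OF mem bdd])
  then show ?thesis by (simp add: N_def)
qed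

lemma sum2: "(\<Sum>z\<in>{0::nat,1}. h z) = h 0 + h 1"
  by simp

theorem mainTheorem8:
  fixes X :: "'a set" and Y :: "'b set" and S :: "('a \<times> 'b) set"
    and f :: "'a \<times> 'b \<Rightarrow> nat" and c :: real
  assumes "finite X" and "finite Y" and "S \<subseteq> X \<times> Y"
    and "\<forall>s\<in>S. f s \<in> {0, 1}"
    and "{s\<in>S. f s = 0} \<noteq> {}" and "{s\<in>S. f s = 1} \<noteq> {}"
    and "c > 0"
    and "\<forall>R\<in>rectangles X Y. \<forall>b\<in>{0::nat, 1}.
           real (card (R \<inter> {s\<in>S. f s = b})) / real (card {s\<in>S. f s = b})
             \<ge> 0.8 * (real (card R) / real (card (X \<times> Y))) - c"
  shows "\<forall>\<epsilon>::real. \<epsilon> \<ge> 0 \<longrightarrow> prt_bar X Y S f \<epsilon> \<ge> (1 / c) * (0.8 - 2.8 * \<epsilon>)"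
proof (intro allI impI)
  note fX = assms(1) and fY = assms(2) and SXY = assms(3) and f01 = assms(4)
    and ne0 = assms(5) and ne1 = assms(6) and cpos = assms(7) and hyp = assms(8)
  fix \<epsilon> :: real assume eps: "\<epsilon> \<ge> 0"
  define RR where "RR = rectangles X Y"
  define N where "N = real (card (X \<times> Y))"
  define S0 where "S0 = {s\<in>S. f s = 0}"
  define S1 where "S1 = {s\<in>S. f s = 1}"
  define n0 where "n0 = real (card S0)"
  define n1 where "n1 = real (card S1)"
  have finXY: "finite (X \<times> Y)" using fX fY by simp
  have finRR: "finite RR" unfolding RR_def using fin_rect[OF fX fY] .
  have finS: "finite S" using finite_subset[OF SXY finXY] .
  have finS0: "finite S0" and finS1: "finite S1" using finS by (auto simp: S0_def S1_def)
  have S0S: "S0 \<subseteq> S" and S1S: "S1 \<subseteq> S" by (auto simp: S0_def S1_def)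
  have neXY: "X \<times> Y \<noteq> {}" using ne0 SXY by blast
  have Npos: "N > 0" using neXY finXY by (simp add: N_def card_gt_0_iff)
  have n0pos: "n0 > 0" using ne0 finS0 by (simp add: n0_def S0_def card_gt_0_iff)
  have n1pos: "n1 > 0" using ne1 finS1 by (simp add: n1_def S1_def card_gt_0_iff)
  define \<mu> where "\<mu> = (\<lambda>s. 2/(7*N) + (if s \<in> S0 then 5/(14*n0) else 0) + (if s \<in> S1 then 5/(14*n1) else 0))"
  have indsum: "(\<Sum>s\<in>X \<times> Y. if s \<in> T then k else 0) = k * real (card T)"
    if "T \<subseteq> X \<times> Y" for T and k :: real
  proof -
    have "(\<Sum>s\<in>X \<times> Y. if s \<in> T then k else 0) = (\<Sum>s\<in>(X \<times> Y) \<inter> T. k)"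
      by (simp only: sum.inter_restrict[OF finXY])
    also have "(X \<times> Y) \<inter> T = T" using that by blast
    finally show ?thesis by simp
  qed
  have dist: "distribution X Y \<mu>"
    unfolding distribution_def
  proof (intro conjI ballI)
    fix s show "0 \<le> \<mu> s" using Npos n0pos n1pos by (simp add: \<mu>_def)
  next
    have "(\<Sum>s\<in>X \<times> Y. \<mu> s) = (\<Sum>s\<in>X \<times> Y. 2/(7*N)) + (\<Sum>s\<in>X \<times> Y. if s \<in> S0 then 5/(14*n0) else 0)
        + (\<Sum>s\<in>X \<times> Y. if s \<in> S1 then 5/(14*n1) else 0)"
      by (simp add: \<mu>_def sum.distrib)
    also have "\<dots> = N * (2/(7*N)) + 5/(14*n0) * n0 + 5/(14*n1) * n1"
      using indsum[of S0] indsum[of S1] S0S S1S SXY by (simp add: N_def n0_def n1_def)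
    also have "\<dots> = 1" using Npos n0pos n1pos by (simp add: field_simps)
    finally show "(\<Sum>s\<in>X \<times> Y. \<mu> s) = 1" .
  qed
  have bdd: "bdd_above {prt_mu X Y S f \<epsilon> \<mu>' | \<mu>'. distribution X Y \<mu>'}"
    by (rule bdd_aboveI[of _ "real (card (X \<times> Y))"]) (use prt_mu_le[OF fX fY SXY f01 neXY _ eps] in blast)
  have core: "(0.8 - 2.8 * \<epsilon>) * \<eta> \<le> c" if fe: "prt_feasible X Y S f \<epsilon> \<mu> \<eta> p" for \<eta> p
  proof -
    define A where "A = (\<lambda>z s. \<Sum>R\<in>{R\<in>RR. s \<in> R}. p R z)"
    have fe': "\<eta> > 0 \<and> (\<forall>R\<in>RR. \<forall>z\<in>{0,1}. p R z \<ge> 0) \<and>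
      (\<Sum>s\<in>S. \<mu> s * A (f s) s) + (\<Sum>s\<in>(X \<times> Y) - S. \<mu> s * (A 0 s + A 1 s)) \<ge> (1 - \<epsilon>) * \<eta> \<and>
      (\<forall>s\<in>X \<times> Y. A 0 s + A 1 s \<le> \<eta>) \<and>
      (\<Sum>R\<in>RR. p R 0) + (\<Sum>R\<in>RR. p R 1) = 1"
      using fe unfolding prt_feasible_def sum2 A_def RR_def by blast
    then have etapos: "\<eta> > 0" and pnn: "\<And>R z. R \<in> RR \<Longrightarrow> z \<in> {0,1} \<Longrightarrow> p R z \<ge> 0"
      and i: "(1 - \<epsilon>) * \<eta> \<le> (\<Sum>s\<in>S. \<mu> s * A (f s) s) + (\<Sum>s\<in>(X \<times> Y) - S. \<mu> s * (A 0 s + A 1 s))"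
      and ii: "\<And>s. s \<in> X \<times> Y \<Longrightarrow> A 0 s + A 1 s \<le> \<eta>"
      and iii: "(\<Sum>R\<in>RR. p R 0) + (\<Sum>R\<in>RR. p R 1) = 1"
      by blast+
    have Ann: "A z s \<ge> 0" if "z \<in> {0,1}" for z s
      unfolding A_def by (rule sum_nonneg) (use pnn that in auto)
    have Asum: "(\<Sum>s\<in>T. A z s) = (\<Sum>R\<in>RR. p R z * real (card (T \<inter> R)))" if "finite T" for T z
    proof -
      have "(\<Sum>s\<in>T. A z s) = (\<Sum>s\<in>T. 1 * (\<Sum>R\<in>{R\<in>RR. s \<in> R}. p R z))" by (simp add: A_def)
      also have "\<dots> = (\<Sum>R\<in>RR. p R z * (\<Sum>s\<in>T \<inter> R. 1))" by (rule swap_sum[OF that finRR])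
      finally show ?thesis by simp
    qed
    define P0 where "P0 = (\<Sum>R\<in>RR. p R 0)"
    define P1 where "P1 = (\<Sum>R\<in>RR. p R 1)"
    define Q0 where "Q0 = (\<Sum>R\<in>RR. p R 0 * real (card R))"
    define Q1 where "Q1 = (\<Sum>R\<in>RR. p R 1 * real (card R))"
    define W0 where "W0 = (\<Sum>R\<in>RR. p R 0 * real (card (S1 \<inter> R)))"
    define W1 where "W1 = (\<Sum>R\<in>RR. p R 1 * real (card (S0 \<inter> R)))"
    have XYsum: "(\<Sum>s\<in>X \<times> Y. A z s) = (\<Sum>R\<in>RR. p R z * real (card R))" for z
    proof -
      have "(\<Sum>s\<in>X \<times> Y. A z s) = (\<Sum>R\<in>RR. p R z * real (card ((X \<times> Y) \<inter> R)))" by (rule Asum[OF finXY])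
      also have "\<dots> = (\<Sum>R\<in>RR. p R z * real (card R))"
      proof (intro sum.cong refl)
        fix R assume "R \<in> RR"
        then have "(X \<times> Y) \<inter> R = R" using rect_sub[of R X Y] by (auto simp: RR_def)
        then show "p R z * real (card ((X \<times> Y) \<inter> R)) = p R z * real (card R)" by simp
      qed
      finally show ?thesis .
    qed
    have F1: "(\<Sum>s\<in>X \<times> Y. A 0 s + A 1 s) = Q0 + Q1"
      by (simp add: sum.distrib XYsum Q0_def Q1_def)
    have hypR: "real (card (S0 \<inter> R)) \<ge> n0 * (0.8 * (real (card R) / N) - c)
        \<and> real (card (S1 \<inter> R)) \<ge> n1 * (0.8 * (real (card R) / N) - c)" if R: "R \<in> RR" for R
    proof -
      have h0: "real (card (R \<inter> S0)) / n0 \<ge> 0.8 * (real (card R) / N) - c"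
        using hyp R by (auto simp: RR_def S0_def n0_def N_def)
      have h1: "real (card (R \<inter> S1)) / n1 \<ge> 0.8 * (real (card R) / N) - c"
        using hyp R by (auto simp: RR_def S1_def n1_def N_def)
      show ?thesis using h0 h1 n0pos n1pos by (simp add: le_divide_eq Int_commute mult.commute)
    qed
    have F2: "W1 \<ge> (0.8 * n0 / N) * Q1 - (n0 * c) * P1"
    proof -
      have "(\<Sum>R\<in>RR. (0.8 * n0 / N) * (p R 1 * real (card R)) - (n0 * c) * p R 1) \<le> W1"
        unfolding W1_def
      proof (rule sum_mono)
        fix R assume R: "R \<in> RR"
        have "p R 1 * (n0 * (0.8 * (real (card R) / N) - c)) \<le> p R 1 * real (card (S0 \<inter> R))"
          by (rule mult_left_mono) (use hypR[OF R] pnn[OF R] in auto)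
        then show "(0.8 * n0 / N) * (p R 1 * real (card R)) - (n0 * c) * p R 1 \<le> p R 1 * real (card (S0 \<inter> R))"
          by (simp add: algebra_simps)
      qed
      then show ?thesis by (simp add: sum_subtractf sum_distrib_left Q1_def P1_def)
    qed
    have F3: "W0 \<ge> (0.8 * n1 / N) * Q0 - (n1 * c) * P0"
    proof -
      have "(\<Sum>R\<in>RR. (0.8 * n1 / N) * (p R 0 * real (card R)) - (n1 * c) * p R 0) \<le> W0"
        unfolding W0_def
      proof (rule sum_mono)
        fix R assume R: "R \<in> RR"
        have "p R 0 * (n1 * (0.8 * (real (card R) / N) - c)) \<le> p R 0 * real (card (S1 \<inter> R))"
          by (rule mult_left_mono) (use hypR[OF R] pnn[OF R] in auto)
        then show "(0.8 * n1 / N) * (p R 0 * real (card R)) - (n1 * c) * p R 0 \<le> p R 0 * real (card (S1 \<inter> R))"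
          by (simp add: algebra_simps)
      qed
      then show ?thesis by (simp add: sum_subtractf sum_distrib_left Q0_def P0_def)
    qed
    have F4a: "(\<Sum>s\<in>S0. A 0 s + A 1 s) \<le> n0 * \<eta>"
      unfolding n0_def by (rule sum_bounded_above) (use ii S0S SXY in auto)
    have F4b: "(\<Sum>s\<in>S1. A 0 s + A 1 s) \<le> n1 * \<eta>"
      unfolding n1_def by (rule sum_bounded_above) (use ii S1S SXY in auto)
    have E0: "(\<Sum>s\<in>S0. A 0 s) \<le> n0 * \<eta> - W1"
    proof -
      have "(\<Sum>s\<in>S0. A 1 s) = W1" unfolding W1_def by (rule Asum[OF finS0])
      then show ?thesis using F4a by (simp add: sum.distrib)
    qed
    have E1: "(\<Sum>s\<in>S1. A 1 s) \<le> n1 * \<eta> - W0"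
    proof -
      have "(\<Sum>s\<in>S1. A 0 s) = W0" unfolding W0_def by (rule Asum[OF finS1])
      then show ?thesis using F4b by (simp add: sum.distrib)
    qed
    define a where "a = 2/(7*N)"
    define b0 where "b0 = 5/(14*n0)"
    define b1 where "b1 = 5/(14*n1)"
    have L1: "(\<Sum>s\<in>S. \<mu> s * A (f s) s) \<le> (\<Sum>s\<in>S. a * (A 0 s + A 1 s))
       + (\<Sum>s\<in>S. if f s = 0 then b0 * A 0 s else 0) + (\<Sum>s\<in>S. if f s = 1 then b1 * A 1 s else 0)"
    proof -
      have "(\<Sum>s\<in>S. \<mu> s * A (f s) s) \<le> (\<Sum>s\<in>S. a * (A 0 s + A 1 s)
         + (if f s = 0 then b0 * A 0 s else 0) + (if f s = 1 then b1 * A 1 s else 0))"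
      proof (rule sum_mono)
        fix s assume s: "s \<in> S"
        have a0: "a \<ge> 0" using Npos by (simp add: a_def)
        have A0: "A 0 s \<ge> 0" and A1: "A 1 s \<ge> 0" using Ann by auto
        have m0: "a * A 0 s \<le> a * (A 0 s + A 1 s)" and m1: "a * A 1 s \<le> a * (A 0 s + A 1 s)"
          using A0 A1 a0 by (simp_all add: mult_left_mono)
        show "\<mu> s * A (f s) s \<le> a * (A 0 s + A 1 s)
         + (if f s = 0 then b0 * A 0 s else 0) + (if f s = 1 then b1 * A 1 s else 0)"
        proof (cases "f s = 0")
          case True
          then have "\<mu> s = a + b0" using s by (simp add: \<mu>_def a_def b0_def S0_def S1_def)
          then show ?thesis using True m0 by (simp add: algebra_simps)
        next
          case False
          then have T: "f s = 1" using f01 s by auto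
          then have "\<mu> s = a + b1" using s by (simp add: \<mu>_def a_def b1_def S0_def S1_def)
          then show ?thesis using T m1 by (simp add: algebra_simps)
        qed
      qed
      then show ?thesis by (simp add: sum.distrib)
    qed
    have L2: "(\<Sum>s\<in>(X \<times> Y) - S. \<mu> s * (A 0 s + A 1 s)) = (\<Sum>s\<in>(X \<times> Y) - S. a * (A 0 s + A 1 s))"
      by (intro sum.cong refl) (auto simp: \<mu>_def a_def S0_def S1_def)
    have L3: "(\<Sum>s\<in>S. a * (A 0 s + A 1 s)) + (\<Sum>s\<in>(X \<times> Y) - S. a * (A 0 s + A 1 s)) = a * (Q0 + Q1)"
      using sum.subset_diff[OF SXY finXY, of "\<lambda>s. a * (A 0 s + A 1 s)"] F1
      by (simp add: sum_distrib_left[symmetric])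
    have L4: "(\<Sum>s\<in>S. if f s = 0 then b0 * A 0 s else 0) = b0 * (\<Sum>s\<in>S0. A 0 s)"
      by (simp add: S0_def sum.inter_filter[OF finS] sum_distrib_left, intro sum.cong, auto)
    have L5: "(\<Sum>s\<in>S. if f s = 1 then b1 * A 1 s else 0) = b1 * (\<Sum>s\<in>S1. A 1 s)"
      by (simp add: S1_def sum.inter_filter[OF finS] sum_distrib_left, intro sum.cong, auto)
    have b0pos: "b0 > 0" using n0pos by (simp add: b0_def)
    have b1pos: "b1 > 0" using n1pos by (simp add: b1_def)
    have G0: "b0 * (\<Sum>s\<in>S0. A 0 s) \<le> 5/14 * \<eta> - a * Q1 + 5/14 * (c * P1)"
    proof -
      have "b0 * (\<Sum>s\<in>S0. A 0 s) \<le> b0 * (n0 * \<eta> - ((0.8 * n0 / N) * Q1 - (n0 * c) * P1))"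
        using E0 F2 b0pos by (intro mult_left_mono) auto
      also have "\<dots> = 5/14 * \<eta> - a * Q1 + 5/14 * (c * P1)"
        using n0pos Npos by (simp add: b0_def a_def field_simps)
      finally show ?thesis .
    qed
    have G1: "b1 * (\<Sum>s\<in>S1. A 1 s) \<le> 5/14 * \<eta> - a * Q0 + 5/14 * (c * P0)"
    proof -
      have "b1 * (\<Sum>s\<in>S1. A 1 s) \<le> b1 * (n1 * \<eta> - ((0.8 * n1 / N) * Q0 - (n1 * c) * P0))"
        using E1 F3 b1pos by (intro mult_left_mono) auto
      also have "\<dots> = 5/14 * \<eta> - a * Q0 + 5/14 * (c * P0)"
        using n1pos Npos by (simp add: b1_def a_def field_simps)
      finally show ?thesis .
    qed
    have cP: "c * P0 + c * P1 = c" using iii by (simp add: P0_def P1_def distrib_left[symmetric])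
    have aQ: "a * (Q0 + Q1) = a * Q0 + a * Q1" by (simp add: distrib_left)
    have fin: "(1 - \<epsilon>) * \<eta> \<le> 5/7 * \<eta> + 5/14 * c"
      using i L1 L2 L3 L4 L5 G0 G1 cP aQ by linarith
    have e2: "(0.8 - 2.8 * \<epsilon>) * \<eta> = (14/5) * ((1 - \<epsilon>) * \<eta> - 5/7 * \<eta>)" by (simp add: algebra_simps)
    have "(14/5) * ((1 - \<epsilon>) * \<eta> - 5/7 * \<eta>) \<le> (14/5) * (5/14 * c)"
      using fin by (intro mult_left_mono) auto
    then show ?thesis using e2 by simp
  qed
  have low: "(1 / c) * (0.8 - 2.8 * \<epsilon>) \<le> prt_mu X Y S f \<epsilon> \<mu>"
    unfolding prt_mu_def
  proof (rule cInf_greatest)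
    obtain p where "prt_feasible X Y S f \<epsilon> \<mu> (1 / real (card (X \<times> Y))) p"
      using ex_feas[OF fX fY SXY f01 neXY dist eps] by blast
    then show "{1 / \<eta> | \<eta> p. prt_feasible X Y S f \<epsilon> \<mu> \<eta> p} \<noteq> {}" by blast
  next
    fix x assume "x \<in> {1 / \<eta> | \<eta> p. prt_feasible X Y S f \<epsilon> \<mu> \<eta> p}"
    then obtain \<eta> p where x: "x = 1 / \<eta>" and fe: "prt_feasible X Y S f \<epsilon> \<mu> \<eta> p" by blast
    have etapos: "\<eta> > 0" using fe by (simp add: prt_feasible_def)
    have K: "0.8 - 2.8 * \<epsilon> \<le> c / \<eta>" using core[OF fe] etapos by (simp add: le_divide_eq)
    have "(1 / c) * (0.8 - 2.8 * \<epsilon>) \<le> (1 / c) * (c / \<eta>)"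
      using K cpos by (intro mult_left_mono) auto
    also have "\<dots> = 1 / \<eta>" using cpos by simp
    finally show "(1 / c) * (0.8 - 2.8 * \<epsilon>) \<le> x" using x by simp
  qed
  have mem: "prt_mu X Y S f \<epsilon> \<mu> \<in> {prt_mu X Y S f \<epsilon> \<mu>' | \<mu>'. distribution X Y \<mu>'}"
    using dist by blast
  have "prt_mu X Y S f \<epsilon> \<mu> \<le> prt_bar X Y S f \<epsilon>"
    unfolding prt_bar_def by (rule cSup_upper[OF mem bdd])
  then show "(1 / c) * (0.8 - 2.8 * \<epsilon>) \<le> prt_bar X Y S f \<epsilon>" using low by linarith
qed

end
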